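(* Let $q\in\mathbb C_p$ with $|1-q|_p<p^{-1/(p-1)}$ ($p$ an odd prime). For $m\in\mathbb Z_+$ and $r\in\mathbb N$ with $m\le r$, $$\binom rm_q q^{\binom m2-rm}=\frac{1}{[m]_q!}\sum_{k=0}^mq^{-rm}S_1(m-1,k;q)(-1)^k[r]_q^{m-k}.$$
   Context: $[x]_q=\frac{1-q^x}{1-q}$; $[m]_q!=[m]_q\cdots[1]_q$, $[0]_q!=1$; $\binom rm_q=\frac{[r]_q!}{[m]_q![r-m]_q!}$. The $q$-Stirling numbers of the first kind are defined by $\prod_{k=1}^N(1+[k]_qz)=\sum_{k\ge0}S_1(N,k;q)z^k$ for $N\ge-1$ (empty product $=1$; $S_1(N,k;q)=0$ for $k>N$; in particular $S_1(-1,0;q)=1$). *)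

theory Defs
  imports "HOL-Computational_Algebra.Polynomial"
begin

definition qint :: "'a::field \<Rightarrow> nat \<Rightarrow> 'a" where
  "qint q x = (if q = 1 then of_nat x else (1 - q ^ x) / (1 - q))"

definition qfact :: "'a::field \<Rightarrow> nat \<Rightarrow> 'a" where
  "qfact q m = (\<Prod>k\<in>{1..m}. qint q k)"

definition qbinom :: "'a::field \<Rightarrow> nat \<Rightarrow> nat \<Rightarrow> 'a" where
  "qbinom q r m = qfact q r / (qfact q m * qfact q (r - m))"

definition qstirling1 :: "'a::field \<Rightarrow> nat \<Rightarrow> nat \<Rightarrow> 'a" where
  "qstirling1 q N k = coeff (\<Prod>i\<in>{1..N}. [:1, qint q i:]) k"

end

theory Submission
  imports Defs
begin

lemma S_step:
  fixes p :: "'a::field poly"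
  assumes "degree p \<le> n"
  shows "(\<Sum>k\<le>Suc n. coeff (p * [:1,a:]) k * (-1)^k * x^(Suc n - k))
       = (x - a) * (\<Sum>k\<le>n. coeff p k * (-1)^k * x^(n-k))"
proof -
  have e: "p * [:1,a:] = p + pCons 0 (smult a p)"
    by (simp add: mult_pCons_right)
  have c0: "coeff p (Suc n) = 0" using assms by (simp add: coeff_eq_0)
  have A: "(\<Sum>k\<le>Suc n. coeff p k * (-1)^k * x^(Suc n - k))
      = x * (\<Sum>k\<le>n. coeff p k * (-1)^k * x^(n-k))"
    by (simp add: c0 sum_distrib_left Suc_diff_le algebra_simps)
  have B: "(\<Sum>k\<le>Suc n. coeff (pCons 0 (smult a p)) k * (-1)^k * x^(Suc n - k))
      = - a * (\<Sum>k\<le>n. coeff p k * (-1)^k * x^(n-k))"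
    by (subst sum.atMost_Suc_shift) (simp add: sum_distrib_left algebra_simps)
  have "(\<Sum>k\<le>Suc n. coeff (p * [:1,a:]) k * (-1)^k * x^(Suc n - k))
     = (\<Sum>k\<le>Suc n. coeff p k * (-1)^k * x^(Suc n - k))
     + (\<Sum>k\<le>Suc n. coeff (pCons 0 (smult a p)) k * (-1)^k * x^(Suc n - k))"
    unfolding e coeff_add by (simp add: distrib_right sum.distrib)
  then show ?thesis unfolding A B by (simp add: algebra_simps)
qed

lemma prod_lemma:
  fixes a :: "nat \<Rightarrow> 'a::field"
  shows "degree (\<Prod>i\<in>{1..N}. [:1, a i:]) \<le> N \<and>
    (\<Sum>k\<le>N. coeff (\<Prod>i\<in>{1..N}. [:1, a i:]) k * (-1)^k * x^(N-k)) = (\<Prod>i\<in>{1..N}. (x - a i))"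
proof (induction N)
  case 0
  then show ?case by simp
next
  case (Suc N)
  have d: "degree ((\<Prod>i\<in>{1..N}. [:1, a i:]) * [:1, a (Suc N):]) \<le> Suc N"
    using Suc.IH degree_mult_le[of "\<Prod>i\<in>{1..N}. [:1, a i:]" "[:1, a (Suc N):]"]
    by (auto split: if_splits)
  show ?case using Suc.IH S_step[of "\<Prod>i\<in>{1..N}. [:1, a i:]" N "a (Suc N)" x] d
    by (simp add: prod.cl_ivl_Suc mult.commute)
qed

lemma qint_diff:
  fixes q :: "'a::field"
  assumes "i \<le> r"
  shows "qint q r - qint q i = q^i * qint q (r - i)"
proof (cases "q = 1")
  case True then show ?thesis using assms by (simp add: qint_def of_nat_diff)
next
  case False
  then have "1 - q \<noteq> 0" by simp
  have "q^r = q^i * q^(r-i)" using assms by (simp add: power_add[symmetric])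
  have "qint q r - qint q i = ((1 - q^r) - (1 - q^i)) / (1 - q)"
    using False by (simp add: qint_def diff_divide_distrib)
  also have "(1 - q^r) - (1 - q^i) = q^i * (1 - q^(r-i))"
    using \<open>q^r = q^i * q^(r-i)\<close> by (simp add: algebra_simps)
  finally show ?thesis using False by (simp add: qint_def)
qed

lemma prod_diff:
  fixes q :: "'a::field"
  assumes "N < r"
  shows "(\<Prod>i\<in>{1..N}. (qint q r - qint q i)) = q^(Suc N choose 2) * (\<Prod>i\<in>{1..N}. qint q (r - i))"
  using assms
proof (induction N)
  case 0 then show ?case by (simp add: numeral_2_eq_2)
next
  case (Suc N)
  have c: "Suc (Suc N) choose 2 = Suc N + (Suc N choose 2)"
    by (simp add: numeral_2_eq_2)
  show ?case using Suc qint_diff[of "Suc N" r q]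
    by (simp add: prod.cl_ivl_Suc c power_add algebra_simps)
qed

lemma qfact_Suc: "qfact q (Suc k) = qint q (Suc k) * qfact q k"
  by (simp add: qfact_def prod.cl_ivl_Suc mult.commute)

lemma qfact_split:
  assumes "Suc n \<le> r"
  shows "qfact q r = qint q r * (\<Prod>i\<in>{1..n}. qint q (r-i)) * qfact q (r - Suc n)"
  using assms
proof (induction n)
  case 0
  then obtain k where "r = Suc k" by (cases r) auto
  then show ?case by (simp add: qfact_Suc)
next
  case (Suc n)
  then obtain k where k: "r - Suc n = Suc k" by (cases "r - Suc n") auto
  then have "r - Suc (Suc n) = k" by simp
  then show ?case using Suc k qfact_Suc[of q k]
    by (simp add: prod.cl_ivl_Suc algebra_simps)
qed

lemma qint_nz:
  fixes q :: "'a::field_char_0"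
  assumes "\<forall>k::nat. 0 < k \<longrightarrow> q ^ k = 1 \<longrightarrow> q = 1" and "0 < k"
  shows "qint q k \<noteq> 0"
  using assms by (auto simp: qint_def)

lemma qfact_nz:
  fixes q :: "'a::field_char_0"
  assumes "\<forall>k::nat. 0 < k \<longrightarrow> q ^ k = 1 \<longrightarrow> q = 1"
  shows "qfact q n \<noteq> 0"
  unfolding qfact_def using qint_nz[OF assms] by auto

theorem mainTheorem13:
  fixes q :: "'a::field_char_0" and m r :: nat
  assumes q_not_root_of_unity: "\<forall>k::nat. 0 < k \<longrightarrow> q ^ k = 1 \<longrightarrow> q = 1"
    and "1 \<le> m" and "m \<le> r"
  shows "qbinom q r m * q powi (int (m choose 2) - int r * int m) =
    (1 / qfact q m) * (\<Sum>k=0..m. q powi (- (int r * int m)) * qstirling1 q (m - 1) k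
        * (-1) ^ k * qint q r ^ (m - k))"
proof -
  obtain N where mN: "m = Suc N" using assms(2) by (cases m) auto
  define x where "x = qint q r"
  define P where "P = (\<Prod>i\<in>{1..N}. [:1, qint q i:])"
  have pl: "degree P \<le> N" "(\<Sum>k\<le>N. coeff P k * (-1)^k * x^(N-k)) = (\<Prod>i\<in>{1..N}. (x - qint q i))"
    using prod_lemma[of "qint q" N x] unfolding P_def by auto
  have st: "(\<Sum>k\<le>Suc N. coeff (P * [:1,0:]) k * (-1)^k * x^(Suc N - k))
       = (x - 0) * (\<Sum>k\<le>N. coeff P k * (-1)^k * x^(N-k))"
    by (rule S_step[OF pl(1)])
  have Nr: "N < r" using assms mN by simp
  have sumeq: "(\<Sum>k=0..m. qstirling1 q (m - 1) k * (-1) ^ k * qint q r ^ (m - k))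
      = x * q^(m choose 2) * (\<Prod>i\<in>{1..N}. qint q (r - i))"
  proof -
    have qs: "qstirling1 q (m-1) = coeff P" by (rule ext) (simp add: qstirling1_def P_def mN)
    show ?thesis
      using st unfolding pl(2) prod_diff[OF Nr, of q, folded x_def] qs
      by (simp add: mN atLeast0AtMost x_def[symmetric] mult.assoc)
  qed
  have fs: "qfact q r = x * (\<Prod>i\<in>{1..N}. qint q (r-i)) * qfact q (r - m)"
    using qfact_split[where n=N and r=r and q=q] Nr mN x_def by simp
  have nz1: "qfact q m \<noteq> 0" "qfact q (r - m) \<noteq> 0" using qfact_nz[OF assms(1)] by auto
  have rhs: "(\<Sum>k=0..m. q powi (- (int r * int m)) * qstirling1 q (m - 1) k
        * (-1) ^ k * qint q r ^ (m - k))
     = q powi (- (int r * int m)) * (\<Sum>k=0..m. qstirling1 q (m - 1) k * (-1) ^ k * qint q r ^ (m - k))"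
    by (simp add: sum_distrib_left mult.assoc)
  show ?thesis
  proof (cases "q = 0")
    case True
    have "int (m choose 2) - int r * int m < 0"
    proof -
      have "m choose 2 \<le> m * (m - 1)" by (simp add: choose_two)
      also have "m * (m - 1) < m * m" using assms(2) by simp
      also have "m * m \<le> r * m" using assms(3) by simp
      finally have "m choose 2 < r * m" .
      then show ?thesis by (metis of_nat_less_iff of_nat_mult diff_less_0_iff_less)
    qed
    moreover have "- (int r * int m) < 0" using assms by simp
    ultimately show ?thesis using True assms(2,3) by (simp add: power_int_0_left_if)
  next
    case False
    have pw: "q powi (int (m choose 2) - int r * int m) = q ^ (m choose 2) * q powi (- (int r * int m))"
      using False by (simp add: power_int_diff power_int_minus field_simps)
    show ?thesis unfolding rhs sumeq pw qbinom_def fs using nz1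
      by (simp add: field_simps)
  qed
qed

end
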